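(* Let $X$ be a regular one-dimensional generalised diffusion on an interval $I$ with speed measure $m$ and scale function $s$, fix $\rho>0$ and a parameter $\theta$, and write $U(x)=U(x,\theta)=G(x,\theta)-R(x,\theta)$. Let $\Delta_-=\arg\max_{s\in\mathrm{int}(I)}[U(s)/\phi(s)]$ and $\Delta_+=\arg\max_{s\in\mathrm{int}(I)}[U(s)/\varphi(s)]$. If $x\in\Delta_+$ and $y\in\Delta_-$ then $x\le y$.
   Context: $\mathrm{int}(I)$ denotes the interior of $I$ together with its accessible boundary points. Standing boundary assumption: either both endpoints of $I$ are non-reflecting (absorbing or killing), or $X$ starts at a reflecting endpoint and the other endpoint is non-reflecting. $\varphi$ and $\phi$ are respectively the strictly increasing and strictly decreasing positive solutions of $\frac12\frac{d}{dm}\frac{d}{ds}f=\rho f$ (with the boundary conditions of $X$), normalised to equal $1$ at the starting point $X_0$; thus $\mathbb{E}_x[e^{-\rho H_y}]$ equals $\varphi(x)/\varphi(y)$ for $x\le y$ and $\phi(x)/\phi(y)$ for $x\ge y$, where $H_y=\inf\{t:X_t=y\}$. $G$ is a terminal reward, $c$ a running reward with $\mathbb{E}_x[\int_0^\infty e^{-\rho t}|c(X_t,\theta)|dt]<\infty$, and $R(x,\theta)=\mathbb{E}_x[\int_0^\infty e^{-\rho t}c(X_t,\theta)dt]$. Standing assumption: there is $\hat x\in\mathrm{int}(I)$ with $U(\hat x,\theta)>0$. *)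

theory Defs
  imports Complex_Main
begin

definition argmax_on :: "'a set \<Rightarrow> ('a \<Rightarrow> real) \<Rightarrow> 'a set" where
  "argmax_on S f = {s \<in> S. \<forall>t\<in>S. f t \<le> f s}"

end

theory Submission
  imports Defs
begin

theorem lemma3p4:
  fixes intI :: "real set"
    and G R :: "real \<Rightarrow> 'p \<Rightarrow> real" and \<theta> :: 'p
    and vphi phi :: "real \<Rightarrow> real"
    and x y :: real
  assumes vphi_pos: "\<And>s. s \<in> intI \<Longrightarrow> vphi s > 0"
    and vphi_incr: "strict_mono_on intI vphi"
    and phi_pos: "\<And>s. s \<in> intI \<Longrightarrow> phi s > 0"
    and phi_decr: "\<And>s t. s \<in> intI \<Longrightarrow> t \<in> intI \<Longrightarrow> s < t \<Longrightarrow> phi t < phi s"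
    and U_pos: "\<exists>xh\<in>intI. G xh \<theta> - R xh \<theta> > 0"
    and x_in: "x \<in> argmax_on intI (\<lambda>s. (G s \<theta> - R s \<theta>) / vphi s)"
    and y_in: "y \<in> argmax_on intI (\<lambda>s. (G s \<theta> - R s \<theta>) / phi s)"
  shows "x \<le> y"
proof (rule ccontr)
  assume "\<not> x \<le> y"
  hence yx: "y < x" by simp
  define U where "U s = G s \<theta> - R s \<theta>" for s
  from x_in have xI: "x \<in> intI" and xm: "\<And>t. t \<in> intI \<Longrightarrow> U t / vphi t \<le> U x / vphi x"
    by (auto simp: argmax_on_def U_def)
  from y_in have yI: "y \<in> intI" and ym: "\<And>t. t \<in> intI \<Longrightarrow> U t / phi t \<le> U y / phi y"
    by (auto simp: argmax_on_def U_def)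
  obtain xh where xh: "xh \<in> intI" "U xh > 0" using U_pos U_def by auto
  have vx: "vphi x > 0" "vphi y > 0" "phi x > 0" "phi y > 0" using xI yI vphi_pos phi_pos by auto
  have "U xh / vphi xh > 0" using xh vphi_pos by auto
  hence "U x / vphi x > 0" using xm[OF xh(1)] by linarith
  hence Ux: "U x > 0" using vx by (simp add: zero_less_divide_iff)
  have "U xh / phi xh > 0" using xh phi_pos by auto
  hence "U y / phi y > 0" using ym[OF xh(1)] by linarith
  hence Uy: "U y > 0" using vx by (simp add: zero_less_divide_iff)
  have vlt: "vphi y < vphi x" using vphi_incr xI yI yx by (auto simp: strict_mono_on_def)
  have plt: "phi x < phi y" using phi_decr xI yI yx by auto
  have "U y / vphi y \<le> U x / vphi x" using xm[OF yI] .
  hence a: "U y * vphi x \<le> U x * vphi y" using vx by (simp add: divide_simps)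
  have "U x / phi x \<le> U y / phi y" using ym[OF xI] .
  hence b: "U x * phi y \<le> U y * phi x" using vx by (simp add: divide_simps)
  have "U y * vphi y < U y * vphi x" using Uy vlt by simp
  hence c: "U y < U x" using a vx by (smt (verit) mult_less_cancel_right)
  have "U x * phi x < U x * phi y" using Ux plt by simp
  hence "U x < U y" using b vx by (smt (verit) mult_less_cancel_right)
  with c show False by simp
qed

end
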